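(* Let $\mathcal{Z}$ be a data space with unknown distribution $\mu$, let $S=(Z_1,\dots,Z_n)$ have i.i.d. entries $Z_i\sim\mu$, let $\mathcal{W}$ be a hypothesis class, and let the learning algorithm be a Markov kernel $P_{W|S}$ producing a hypothesis $W\in\mathcal{W}$. Write $P_W$ for the marginal of $W$ and $P_{W,Z_i}$ for the joint distribution of $(W,Z_i)$, $i=1,\dots,n$. Let $l:\mathcal{W}\times\mathcal{Z}\to\mathbb{R}^+$ be a loss function. For each $i=1,\dots,n$ let $\widehat{P}_{W,Z_i}$ be an auxiliary joint distribution on $\mathcal{W}\times\mathcal{Z}$, and let $\Lambda_{l(W,Z_i)}(\lambda)=\log \mathbb{E}_{\widehat{P}_{W,Z_i}}\big[e^{\lambda(l(W,Z_i)-\mathbb{E}_{\widehat{P}_{W,Z_i}}[l(W,Z_i)])}\big]$ be the cumulant generating function of $l(W,Z_i)$ under $\widehat{P}_{W,Z_i}$. Assume that for every $i=1,\dots,n$, $\Lambda_{l(W,Z_i)}(\lambda)$ exists, $\Lambda_{l(W,Z_i)}(\lambda)\le\psi_+(\lambda)$ for all $\lambda\in[0,b_+)$ with $0<b_+<+\infty$, and $\Lambda_{l(W,Z_i)}(\lambda)\le\psi_-(-\lambda)$ for all $\lambda\in(b_-,0]$ (with $b_-<0$), where $\psi_+$ and $\psi_-$ are convex functions satisfying $\psi_-(0)=\psi_+(0)=\psi_+'(0)=\psi_-'(0)=0$. Define $\psi_+^{\star-1}(x)=\inf_{\lambda\in(0,b_+)}\frac{x+\psi_+(\lambda)}{\lambda}$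 and $\psi_-^{\star-1}(x)=\inf_{\lambda\in(0,-b_-)}\frac{x+\psi_-(\lambda)}{\lambda}$, and set $A_i=KL(P_W\otimes\mu\,\|\,\widehat{P}_{W,Z_i})$ and $B_i=KL(P_{W,Z_i}\,\|\,\widehat{P}_{W,Z_i})$. Then $$\overline{\text{gen}}(P_{W|S},\mu)\le\frac1n\sum_{i=1}^n\big(\psi_+^{\star-1}(A_i)+\psi_-^{\star-1}(B_i)\big),\qquad -\overline{\text{gen}}(P_{W|S},\mu)\le\frac1n\sum_{i=1}^n\big(\psi_-^{\star-1}(A_i)+\psi_+^{\star-1}(B_i)\big).$$
   Context: Population risk: $L_P(w,\mu)=\int_{\mathcal{Z}} l(w,z)\,\mu(dz)$. Empirical risk: $L_E(w,S)=\frac1n\sum_{i=1}^n l(w,Z_i)$. Expected generalization error: $\overline{\text{gen}}(P_{W|S},\mu)=\mathbb{E}_{P_{W,S}}[L_P(W,\mu)-L_E(W,S)]$. $KL(P\|Q)=\int \log\frac{dP}{dQ}\,dP$ is the Kullback–Leibler divergence (natural logarithm). $P_W\otimes\mu$ denotes the product measure. *)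

theory Defs
  imports "HOL-Probability.Probability"
begin

text \<open>Kullback--Leibler divergence KL(P || Q) with natural logarithm, valued in the
extended reals: if P is absolutely continuous w.r.t. Q and the log-likelihood ratio
log (dP/dQ) is P-integrable, it is the integral of log (dP/dQ) against P; otherwise it
is +infinity (for probability measures this is exactly the usual convention).\<close>
definition KL :: "'a measure \<Rightarrow> 'a measure \<Rightarrow> ereal" where
  "KL P Q =
     (if absolutely_continuous Q P \<and>
         integrable P (\<lambda>x. ln (enn2real (RN_deriv Q P x)))
      then ereal (\<integral>x. ln (enn2real (RN_deriv Q P x)) \<partial>P)
      else \<infinity>)"

definition cgf :: "'a measure \<Rightarrow> ('a \<Rightarrow> real) \<Rightarrow> real \<Rightarrow> real" where
  "cgf P f lam = ln (\<integral>x. exp (lam * (f x - (\<integral>y. f y \<partial>P))) \<partial>P)"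

definition cgf_exists :: "'a measure \<Rightarrow> ('a \<Rightarrow> real) \<Rightarrow> real \<Rightarrow> bool" where
  "cgf_exists P f lam \<longleftrightarrow>
     integrable P f \<and> integrable P (\<lambda>x. exp (lam * (f x - (\<integral>y. f y \<partial>P))))"

definition psi_star_inv :: "(real \<Rightarrow> real) \<Rightarrow> real set \<Rightarrow> ereal \<Rightarrow> ereal" where
  "psi_star_inv psi I x = (INF lam\<in>I. (x + ereal (psi lam)) / ereal lam)"

definition joint_WS :: "'w measure \<Rightarrow> 's measure \<Rightarrow> ('s \<Rightarrow> 'w measure) \<Rightarrow> ('w \<times> 's) measure" where
  "joint_WS MW SS K = SS \<bind> (\<lambda>s. distr (K s) (MW \<Otimes>\<^sub>M SS) (\<lambda>w. (w, s)))"

definition gen_bar :: "nat \<Rightarrow> ('w \<Rightarrow> 'z \<Rightarrow> real) \<Rightarrow> ('w \<times> (nat \<Rightarrow> 'z)) measure \<Rightarrow> 'z measure \<Rightarrow> real" where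
  "gen_bar n l PWS mu =
     (\<integral>ws. ((\<integral>z. l (fst ws) z \<partial>mu) - (\<Sum>i<n. l (fst ws) (snd ws i)) / real n) \<partial>PWS)"

end

theory Submission
  imports Defs
begin

lemma DV:
  fixes P Q :: "'a measure" and g :: "'a \<Rightarrow> real"
  assumes P: "prob_space P" and Q: "prob_space Q" and sets: "sets P = sets Q"
    and ac: "absolutely_continuous Q P"
    and iln: "integrable P (\<lambda>x. ln (enn2real (RN_deriv Q P x)))"
    and gP: "integrable P g" and eQ: "integrable Q (\<lambda>x. exp (g x))"
  shows "(\<integral>x. g x \<partial>P) \<le> (\<integral>x. ln (enn2real (RN_deriv Q P x)) \<partial>P) + ln (\<integral>x. exp (g x) \<partial>Q)"
proof -
  interpret P: prob_space P by fact
  interpret Q: prob_space Q by fact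
  define f where "f = RN_deriv Q P"
  define fr where "fr x = enn2real (f x)" for x
  define E where "E = (\<integral>x. exp (g x) \<partial>Q)"
  have dens: "density Q f = P" unfolding f_def using Q.density_RN_deriv[OF ac sets] .
  have fmeas[measurable]: "f \<in> borel_measurable Q" unfolding f_def by simp
  have gmeasP: "g \<in> borel_measurable P" using gP by auto
  have gmeas[measurable]: "g \<in> borel_measurable Q" using gmeasP measurable_cong_sets[OF sets refl] by blast
  have Epos: "E > 0"
  proof -
    have "E \<ge> 0" unfolding E_def by (rule integral_nonneg_AE) auto
    moreover have "E \<noteq> 0"
    proof
      assume "E = 0"
      then have "AE x in Q. exp (g x) = 0"
        unfolding E_def by (subst (asm) integral_nonneg_eq_0_iff_AE[OF eQ]) auto
      then have "AE x in Q. False" by simp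
      then show False by (simp add: Q.AE_False)
    qed
    ultimately show ?thesis by simp
  qed
  have finQ: "AE x in Q. f x \<noteq> \<infinity>"
    unfolding f_def using Q.RN_deriv_finite[OF P.sigma_finite_measure ac sets] .
  have posP: "AE x in P. 0 < fr x"
  proof -
    have "AE x in Q. 0 < f x \<longrightarrow> 0 < fr x"
      using finQ by eventually_elim (auto simp: fr_def enn2real_positive_iff less_top)
    then have "AE x in density Q f. 0 < fr x" by (subst AE_density) auto
    then show ?thesis unfolding dens .
  qed
  define h where "h x = exp (g x) / (fr x * E)" for x
  have hmeas[measurable]: "h \<in> borel_measurable Q" unfolding h_def fr_def by measurable
  have hmeasP: "h \<in> borel_measurable P" using hmeas measurable_cong_sets[OF sets refl] by blast
  have "(\<integral>\<^sup>+x. ennreal (h x) \<partial>P) = (\<integral>\<^sup>+x. f x * ennreal (h x) \<partial>Q)"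
    by (subst dens[symmetric]) (rule nn_integral_density; measurable)
  also have "\<dots> \<le> (\<integral>\<^sup>+x. ennreal (exp (g x) / E) \<partial>Q)"
  proof (rule nn_integral_mono_AE)
    show "AE x in Q. f x * ennreal (h x) \<le> ennreal (exp (g x) / E)"
      using finQ
    proof eventually_elim
      case (elim x)
      show ?case
      proof (cases "f x = 0")
        case True then show ?thesis by simp
      next
        case False
        then have fx: "f x = ennreal (fr x)" "0 < fr x"
          using elim by (auto simp: fr_def enn2real_positive_iff less_top zero_less_iff_neq_zero)
        then have "f x * ennreal (h x) = ennreal (fr x * h x)"
          using Epos by (subst ennreal_mult) (auto simp: h_def)
        also have "fr x * h x = exp (g x) / E" using fx Epos by (simp add: h_def)
        finally show ?thesis by simp
      qed
    qed
  qed
  also have "\<dots> = ennreal (\<integral>x. exp (g x) / E \<partial>Q)"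
    by (rule nn_integral_eq_integral) (use eQ Epos in auto)
  also have "(\<integral>x. exp (g x) / E \<partial>Q) = 1" using Epos by (simp add: E_def)
  finally have hle: "(\<integral>\<^sup>+x. ennreal (h x) \<partial>P) \<le> 1" by simp
  have hnn: "AE x in P. 0 \<le> h x" using posP by eventually_elim (use Epos in \<open>auto simp: h_def\<close>)
  have hint: "integrable P h"
    by (rule integrableI_nonneg[OF hmeasP hnn]) (use hle in \<open>auto simp: top_unique less_top[symmetric]\<close>)
  have hint1: "(\<integral>x. h x \<partial>P) \<le> 1"
    using hle by (subst integral_eq_nn_integral[OF hmeasP hnn]) (simp add: enn2real_leI)
  have pw: "AE x in P. g x - ln (fr x) - ln E \<le> h x - 1"
    using posP
  proof eventually_elim
    case (elim x)
    have "ln (h x) = g x - ln (fr x) - ln E"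
      using elim Epos by (simp add: h_def ln_div ln_mult)
    moreover have "ln (h x) \<le> h x - 1" using elim Epos by (intro ln_le_minus_one) (simp add: h_def)
    ultimately show ?case by simp
  qed
  have ilnfr: "integrable P (\<lambda>x. ln (fr x))" using iln by (simp add: fr_def f_def)
  have "(\<integral>x. g x - ln (fr x) - ln E \<partial>P) \<le> (\<integral>x. h x - 1 \<partial>P)"
    by (rule integral_mono_AE) (use gP ilnfr hint pw in auto)
  also have "(\<integral>x. h x - 1 \<partial>P) = (\<integral>x. h x \<partial>P) - 1"
    using hint by (simp add: P.prob_space)
  also have "(\<integral>x. g x - ln (fr x) - ln E \<partial>P) = (\<integral>x. g x \<partial>P) - (\<integral>x. ln (fr x) \<partial>P) - ln E"
    using gP ilnfr by (simp add: P.prob_space)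
  finally show ?thesis using hint1 by (simp add: fr_def f_def E_def)
qed

lemma bound:
  fixes P Q :: "'a measure" and L :: "'a \<Rightarrow> real" and sg :: real
  assumes P: "prob_space P" and Q: "prob_space Q" and sets: "sets P = sets Q"
    and LP: "integrable P L" and LQ: "integrable Q L"
    and I: "\<And>lam. lam \<in> I \<Longrightarrow> 0 < lam"
    and H: "\<And>lam. lam \<in> I \<Longrightarrow> integrable Q (\<lambda>x. exp (sg * lam * (L x - (\<integral>y. L y \<partial>Q)))) \<and>
                ln (\<integral>x. exp (sg * lam * (L x - (\<integral>y. L y \<partial>Q))) \<partial>Q) \<le> psi lam"
  shows "ereal (sg * ((\<integral>x. L x \<partial>P) - (\<integral>x. L x \<partial>Q))) \<le> psi_star_inv psi I (KL P Q)"
  unfolding psi_star_inv_def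
proof (rule INF_greatest)
  fix lam assume lamI: "lam \<in> I"
  have lam: "0 < lam" using I[OF lamI] .
  interpret P: prob_space P by fact
  show "ereal (sg * ((\<integral>x. L x \<partial>P) - (\<integral>x. L x \<partial>Q))) \<le> (KL P Q + ereal (psi lam)) / ereal lam"
  proof (cases "absolutely_continuous Q P \<and> integrable P (\<lambda>x. ln (enn2real (RN_deriv Q P x)))")
    case False
    then have "KL P Q = \<infinity>" by (simp add: KL_def)
    then show ?thesis using lam by simp
  next
    case True
    define k where "k = (\<integral>x. ln (enn2real (RN_deriv Q P x)) \<partial>P)"
    have KL: "KL P Q = ereal k" using True by (simp add: KL_def k_def)
    define g where "g x = sg * lam * (L x - (\<integral>y. L y \<partial>Q))" for x
    have gP: "integrable P g" unfolding g_def using LP by auto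
    have eQ: "integrable Q (\<lambda>x. exp (g x))" using H[OF lamI] by (simp add: g_def)
    have "(\<integral>x. g x \<partial>P) \<le> k + ln (\<integral>x. exp (g x) \<partial>Q)"
      using DV[OF P Q sets _ _ gP eQ] True by (simp add: k_def)
    also have "ln (\<integral>x. exp (g x) \<partial>Q) \<le> psi lam" using H[OF lamI] by (simp add: g_def)
    finally have "(\<integral>x. g x \<partial>P) \<le> k + psi lam" by simp
    moreover have "(\<integral>x. g x \<partial>P) = lam * (sg * ((\<integral>x. L x \<partial>P) - (\<integral>x. L x \<partial>Q)))"
      unfolding g_def using LP by (simp add: P.prob_space algebra_simps)
    ultimately have "sg * ((\<integral>x. L x \<partial>P) - (\<integral>x. L x \<partial>Q)) \<le> (k + psi lam) / lam"
      using lam by (simp add: pos_le_divide_eq mult.commute)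
    then show ?thesis using lam by (simp add: KL)
  qed
qed

theorem theorem1:
  fixes MW :: "'w measure" and mu :: "'z measure" and n :: nat
    and K :: "(nat \<Rightarrow> 'z) \<Rightarrow> 'w measure"
    and l :: "'w \<Rightarrow> 'z \<Rightarrow> real"
    and Phat :: "nat \<Rightarrow> ('w \<times> 'z) measure"
    and psi_plus psi_minus :: "real \<Rightarrow> real"
    and b_plus :: real and b_minus :: ereal
  defines "SS \<equiv> PiM {..<n} (\<lambda>_. mu)"
  defines "PWS \<equiv> joint_WS MW SS K"
  defines "PW \<equiv> distr PWS MW fst"
  defines "PWZ \<equiv> (\<lambda>i. distr PWS (MW \<Otimes>\<^sub>M mu) (\<lambda>ws. (fst ws, snd ws i)))"
  defines "L \<equiv> (\<lambda>p. l (fst p) (snd p))"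
  assumes n_pos: "0 < n"
    and mu_prob: "prob_space mu"
    and K_kernel: "K \<in> SS \<rightarrow>\<^sub>M prob_algebra MW"
    and l_meas: "L \<in> borel_measurable (MW \<Otimes>\<^sub>M mu)"
    and l_nonneg: "\<And>w z. l w z \<ge> 0"
    and gen_LP: "integrable (PW \<Otimes>\<^sub>M mu) L"
    and gen_LE: "\<And>i. i < n \<Longrightarrow> integrable (PWZ i) L"
    and Phat_prob: "\<And>i. i < n \<Longrightarrow> Phat i \<in> space (prob_algebra (MW \<Otimes>\<^sub>M mu))"
    and b_plus: "0 < b_plus"
    and b_minus: "b_minus < 0"
    and cgf_plus: "\<And>i lam. i < n \<Longrightarrow> 0 \<le> lam \<Longrightarrow> lam < b_plus \<Longrightarrow>
                     cgf_exists (Phat i) L lam \<and> cgf (Phat i) L lam \<le> psi_plus lam"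
    and cgf_minus: "\<And>i lam. i < n \<Longrightarrow> b_minus < ereal lam \<Longrightarrow> lam \<le> 0 \<Longrightarrow>
                     cgf_exists (Phat i) L lam \<and> cgf (Phat i) L lam \<le> psi_minus (- lam)"
    and psi_plus_convex: "convex_on {0..<b_plus} psi_plus"
    and psi_minus_convex: "convex_on {lam. 0 \<le> lam \<and> ereal lam < - b_minus} psi_minus"
    and psi_plus_0: "psi_plus 0 = 0"
    and psi_minus_0: "psi_minus 0 = 0"
    and psi_plus_deriv: "(psi_plus has_real_derivative 0) (at_right 0)"
    and psi_minus_deriv: "(psi_minus has_real_derivative 0) (at_right 0)"
  shows "ereal (gen_bar n l PWS mu) \<le>
           ereal (1 / real n) *
             (\<Sum>i<n. psi_star_inv psi_plus {0<..<b_plus} (KL (PW \<Otimes>\<^sub>M mu) (Phat i))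
                   + psi_star_inv psi_minus {lam. 0 < lam \<and> ereal lam < - b_minus} (KL (PWZ i) (Phat i)))
       \<and> ereal (- gen_bar n l PWS mu) \<le>
           ereal (1 / real n) *
             (\<Sum>i<n. psi_star_inv psi_minus {lam. 0 < lam \<and> ereal lam < - b_minus} (KL (PW \<Otimes>\<^sub>M mu) (Phat i))
                   + psi_star_inv psi_plus {0<..<b_plus} (KL (PWZ i) (Phat i)))"
proof -
  interpret mu: prob_space mu by fact
  have SSprob: "prob_space SS" unfolding SS_def by (rule prob_space_PiM) (rule mu_prob)
  have SSsp: "SS \<in> space (prob_algebra SS)" using SSprob by (simp add: space_prob_algebra)
  define N where "N s = distr (K s) (MW \<Otimes>\<^sub>M SS) (\<lambda>w. (w, s))" for s
  have Ksub[measurable]: "K \<in> SS \<rightarrow>\<^sub>M subprob_algebra MW" using K_kernel by (rule measurable_prob_algebraD)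
  have Nmeas: "N \<in> SS \<rightarrow>\<^sub>M prob_algebra (MW \<Otimes>\<^sub>M SS)"
  proof (rule measurable_prob_algebraI)
    fix s assume s: "s \<in> space SS"
    have "K s \<in> space (prob_algebra MW)" using measurable_space[OF K_kernel s] .
    then have "prob_space (K s)" "sets (K s) = sets MW" by (auto simp: space_prob_algebra)
    moreover have "(\<lambda>w. (w, s)) \<in> MW \<rightarrow>\<^sub>M MW \<Otimes>\<^sub>M SS"
      by (rule measurable_Pair[OF measurable_ident_sets[OF refl] measurable_const[OF s]])
    ultimately show "prob_space (N s)" unfolding N_def
      using measurable_cong_sets[of "K s" MW "MW \<Otimes>\<^sub>M SS" "MW \<Otimes>\<^sub>M SS"]
      by (metis prob_space.prob_space_distr)
  next
    have sw: "(\<lambda>(s, w). (w, s)) \<in> SS \<Otimes>\<^sub>M MW \<rightarrow>\<^sub>M MW \<Otimes>\<^sub>M SS"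
      by (rule measurable_pair_swap')
    show "N \<in> SS \<rightarrow>\<^sub>M subprob_algebra (MW \<Otimes>\<^sub>M SS)"
      unfolding N_def by (rule measurable_distr2[where f="\<lambda>s w. (w, s)", OF sw Ksub])
  qed
  have PWS_eq: "PWS = SS \<bind> N" unfolding PWS_def joint_WS_def N_def ..
  have PWSprob: "prob_space PWS" unfolding PWS_eq by (rule prob_space_bind'[OF SSsp Nmeas])
  have PWSsets: "sets PWS = sets (MW \<Otimes>\<^sub>M SS)" unfolding PWS_eq by (rule sets_bind'[OF SSsp Nmeas])
  interpret PWS: prob_space PWS by fact
  have fst_meas: "fst \<in> PWS \<rightarrow>\<^sub>M MW" using measurable_cong_sets[OF PWSsets refl] by auto
  have proj_meas: "(\<lambda>ws. (fst ws, snd ws i)) \<in> PWS \<rightarrow>\<^sub>M MW \<Otimes>\<^sub>M mu" if i: "i < n" for i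
  proof -
    have c: "(\<lambda>x. x i) \<in> SS \<rightarrow>\<^sub>M mu" unfolding SS_def
      using i by (intro measurable_component_singleton[where M="\<lambda>_. mu"]) simp
    have "(\<lambda>ws. (fst ws, snd ws i)) \<in> MW \<Otimes>\<^sub>M SS \<rightarrow>\<^sub>M MW \<Otimes>\<^sub>M mu"
      by (rule measurable_Pair[OF measurable_fst measurable_compose[OF measurable_snd c]])
    then show ?thesis using measurable_cong_sets[OF PWSsets refl] by auto
  qed
  have PWprob: "prob_space PW" unfolding PW_def by (rule PWS.prob_space_distr[OF fst_meas])
  have PWsets: "sets PW = sets MW" unfolding PW_def by simp
  have P1prob: "prob_space (PW \<Otimes>\<^sub>M mu)" by (rule prob_space_pair[OF PWprob mu_prob])
  have P1sets: "sets (PW \<Otimes>\<^sub>M mu) = sets (MW \<Otimes>\<^sub>M mu)" by (rule sets_pair_measure_cong[OF PWsets refl])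
  have PZprob: "prob_space (PWZ i)" if "i < n" for i
    unfolding PWZ_def by (rule PWS.prob_space_distr[OF proj_meas[OF that]])
  have PZsets: "sets (PWZ i) = sets (MW \<Otimes>\<^sub>M mu)" for i unfolding PWZ_def by simp
  have Hprob: "prob_space (Phat i)" and Hsets: "sets (Phat i) = sets (MW \<Otimes>\<^sub>M mu)" if "i < n" for i
    using Phat_prob[OF that] by (auto simp: space_prob_algebra)
  interpret PWmu: pair_sigma_finite PW mu
    unfolding pair_sigma_finite_def using PWprob mu_prob by (simp add: prob_space_imp_sigma_finite)
  define phi where "phi w = (\<integral>z. l w z \<partial>mu)" for w
  have phi_int: "integrable PW phi"
    using PWmu.integrable_fst'[OF gen_LP] by (simp add: phi_def[abs_def] L_def)
  have phi_eq: "(\<integral>w. phi w \<partial>PW) = (\<integral>x. L x \<partial>(PW \<Otimes>\<^sub>M mu))"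
    using PWmu.integral_fst'[OF gen_LP] by (simp add: phi_def[abs_def] L_def)
  have phi_meas: "phi \<in> borel_measurable MW"
    using borel_measurable_integrable[OF phi_int] measurable_cong_sets[OF PWsets refl] by auto
  have phi_intS: "integrable PWS (\<lambda>ws. phi (fst ws))"
    using phi_int integrable_distr_eq[OF fst_meas phi_meas] by (simp add: PW_def)
  have phi_eqS: "(\<integral>ws. phi (fst ws) \<partial>PWS) = (\<integral>x. L x \<partial>(PW \<Otimes>\<^sub>M mu))"
    using phi_eq integral_distr[OF fst_meas phi_meas] by (simp add: PW_def)
  have Li_intS: "integrable PWS (\<lambda>ws. l (fst ws) (snd ws i))" if "i < n" for i
    using gen_LE[OF that] integrable_distr_eq[OF proj_meas[OF that] l_meas] by (simp add: PWZ_def L_def)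
  have Li_eqS: "(\<integral>ws. l (fst ws) (snd ws i) \<partial>PWS) = (\<integral>x. L x \<partial>(PWZ i))" if "i < n" for i
    using integral_distr[OF proj_meas[OF that] l_meas] by (simp add: PWZ_def L_def)
  define EP where "EP = (\<integral>x. L x \<partial>(PW \<Otimes>\<^sub>M mu))"
  define EZ where "EZ i = (\<integral>x. L x \<partial>(PWZ i))" for i
  define EH where "EH i = (\<integral>x. L x \<partial>(Phat i))" for i
  have gen_eq: "gen_bar n l PWS mu = (1 / real n) * (\<Sum>i<n. EP - EZ i)"
  proof -
    have Sint: "integrable PWS (\<lambda>ws. \<Sum>i<n. l (fst ws) (snd ws i))"
      using Li_intS by auto
    have Sint': "integrable PWS (\<lambda>ws. (\<Sum>i<n. l (fst ws) (snd ws i)) / real n)"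
      using Sint by (rule integrable_divide_zero)
    have "gen_bar n l PWS mu = (\<integral>ws. phi (fst ws) - (\<Sum>i<n. l (fst ws) (snd ws i)) / real n \<partial>PWS)"
      unfolding gen_bar_def phi_def ..
    also have "\<dots> = (\<integral>ws. phi (fst ws) \<partial>PWS) - (\<integral>ws. (\<Sum>i<n. l (fst ws) (snd ws i)) / real n \<partial>PWS)"
      by (rule Bochner_Integration.integral_diff[OF phi_intS Sint'])
    also have "(\<integral>ws. (\<Sum>i<n. l (fst ws) (snd ws i)) / real n \<partial>PWS) = (\<integral>ws. (\<Sum>i<n. l (fst ws) (snd ws i)) \<partial>PWS) / real n"
      by (rule integral_divide_zero)
    also have "(\<integral>ws. (\<Sum>i<n. l (fst ws) (snd ws i)) \<partial>PWS) = (\<Sum>i<n. (\<integral>ws. l (fst ws) (snd ws i) \<partial>PWS))"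
      using Li_intS by (intro Bochner_Integration.integral_sum) auto
    also have "\<dots> = (\<Sum>i<n. EZ i)"
      by (rule sum.cong) (auto simp: Li_eqS EZ_def)
    also have "(\<integral>ws. phi (fst ws) \<partial>PWS) = EP" using phi_eqS by (simp add: EP_def)
    finally have "gen_bar n l PWS mu = EP - (\<Sum>i<n. EZ i) / real n" .
    moreover have "(\<Sum>i<n. EP - EZ i) = real n * EP - (\<Sum>i<n. EZ i)"
      by (simp add: sum_subtractf)
    ultimately show ?thesis using n_pos by (simp add: field_simps)
  qed
  define Ip where "Ip = {0<..<b_plus}"
  define Im where "Im = {lam. 0 < lam \<and> ereal lam < - b_minus}"
  have Hint: "integrable (Phat i) L" if "i < n" for i
    using cgf_plus[OF that order_refl b_plus] by (simp add: cgf_exists_def)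
  have Hp: "integrable (Phat i) (\<lambda>x. exp (1 * lam * (L x - (\<integral>y. L y \<partial>Phat i)))) \<and>
      ln (\<integral>x. exp (1 * lam * (L x - (\<integral>y. L y \<partial>Phat i))) \<partial>Phat i) \<le> psi_plus lam"
    if "i < n" "lam \<in> Ip" for i lam
    using cgf_plus[OF that(1), of lam] that(2) by (simp add: Ip_def cgf_def cgf_exists_def)
  have Hm: "integrable (Phat i) (\<lambda>x. exp (-1 * lam * (L x - (\<integral>y. L y \<partial>Phat i)))) \<and>
      ln (\<integral>x. exp (-1 * lam * (L x - (\<integral>y. L y \<partial>Phat i))) \<partial>Phat i) \<le> psi_minus lam"
    if "i < n" "lam \<in> Im" for i lam
  proof -
    have "b_minus < ereal (- lam)" using that(2) by (simp add: Im_def ereal_less_uminus_reorder)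
    moreover have "- lam \<le> 0" using that(2) by (simp add: Im_def)
    ultimately show ?thesis
      using cgf_minus[OF that(1), of "- lam"] by (simp add: cgf_def cgf_exists_def)
  qed
  have IpI: "\<And>lam. lam \<in> Ip \<Longrightarrow> 0 < lam" and ImI: "\<And>lam. lam \<in> Im \<Longrightarrow> 0 < lam"
    by (auto simp: Ip_def Im_def)
  have b1: "ereal (1 * (EP - EH i)) \<le> psi_star_inv psi_plus Ip (KL (PW \<Otimes>\<^sub>M mu) (Phat i))" if "i < n" for i
    unfolding EP_def EH_def
    by (rule bound[OF P1prob Hprob[OF that] _ gen_LP Hint[OF that] IpI Hp[OF that]])
       (simp add: P1sets Hsets[OF that])
  have b2: "ereal (-1 * (EZ i - EH i)) \<le> psi_star_inv psi_minus Im (KL (PWZ i) (Phat i))" if "i < n" for i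
    unfolding EZ_def EH_def
    by (rule bound[OF PZprob[OF that] Hprob[OF that] _ gen_LE[OF that] Hint[OF that] ImI Hm[OF that]])
       (simp add: PZsets Hsets[OF that])
  have b3: "ereal (-1 * (EP - EH i)) \<le> psi_star_inv psi_minus Im (KL (PW \<Otimes>\<^sub>M mu) (Phat i))" if "i < n" for i
    unfolding EP_def EH_def
    by (rule bound[OF P1prob Hprob[OF that] _ gen_LP Hint[OF that] ImI Hm[OF that]])
       (simp add: P1sets Hsets[OF that])
  have b4: "ereal (1 * (EZ i - EH i)) \<le> psi_star_inv psi_plus Ip (KL (PWZ i) (Phat i))" if "i < n" for i
    unfolding EZ_def EH_def
    by (rule bound[OF PZprob[OF that] Hprob[OF that] _ gen_LE[OF that] Hint[OF that] IpI Hp[OF that]])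
       (simp add: PZsets Hsets[OF that])
  have s1: "ereal (\<Sum>i<n. EP - EZ i) \<le> (\<Sum>i<n. psi_star_inv psi_plus Ip (KL (PW \<Otimes>\<^sub>M mu) (Phat i))
                   + psi_star_inv psi_minus Im (KL (PWZ i) (Phat i)))"
    unfolding sum_ereal[symmetric]
  proof (rule sum_mono)
    fix i assume "i \<in> {..<n}"
    then have i: "i < n" by simp
    have "ereal (EP - EZ i) = ereal (1 * (EP - EH i)) + ereal (-1 * (EZ i - EH i))" by simp
    also have "\<dots> \<le> psi_star_inv psi_plus Ip (KL (PW \<Otimes>\<^sub>M mu) (Phat i))
                   + psi_star_inv psi_minus Im (KL (PWZ i) (Phat i))"
      by (rule add_mono[OF b1[OF i] b2[OF i]])
    finally show "ereal (EP - EZ i) \<le> \<dots>" .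
  qed
  have s2: "ereal (\<Sum>i<n. EZ i - EP) \<le> (\<Sum>i<n. psi_star_inv psi_minus Im (KL (PW \<Otimes>\<^sub>M mu) (Phat i))
                   + psi_star_inv psi_plus Ip (KL (PWZ i) (Phat i)))"
    unfolding sum_ereal[symmetric]
  proof (rule sum_mono)
    fix i assume "i \<in> {..<n}"
    then have i: "i < n" by simp
    have "ereal (EZ i - EP) = ereal (-1 * (EP - EH i)) + ereal (1 * (EZ i - EH i))" by simp
    also have "\<dots> \<le> psi_star_inv psi_minus Im (KL (PW \<Otimes>\<^sub>M mu) (Phat i))
                   + psi_star_inv psi_plus Ip (KL (PWZ i) (Phat i))"
      by (rule add_mono[OF b3[OF i] b4[OF i]])
    finally show "ereal (EZ i - EP) \<le> \<dots>" .
  qed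
  have g1: "ereal (gen_bar n l PWS mu) = ereal (1 / real n) * ereal (\<Sum>i<n. EP - EZ i)"
    using gen_eq by simp
  have g2: "ereal (- gen_bar n l PWS mu) = ereal (1 / real n) * ereal (\<Sum>i<n. EZ i - EP)"
    using gen_eq by (simp add: sum_subtractf minus_divide_left)
  show ?thesis
    unfolding g1 g2 Ip_def[symmetric] Im_def[symmetric]
    using ereal_mult_left_mono[OF s1, of "ereal (1 / real n)"] ereal_mult_left_mono[OF s2, of "ereal (1 / real n)"]
    by simp
qed

end
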